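(* Let $G$ be an abelian group, let $H\leq G$ be a subgroup with $|H|\geq 3$, and let $Y\subseteq G$ be a finite subset such that $Y\setminus \{y_0\}$ is $H$-periodic (or empty) for some $y_0\in Y$. Then: 1. $Y$ is aperiodic, and $Y=(Y\setminus \{y_0\})\cup \{y_0\}$ is its unique reduced quasi-periodic decomposition. 2. If $Y=Y_1\cup Y_0$ is a $K$-quasi-periodic decomposition (for a nontrivial subgroup $K$, with $Y_0$ the part contained in a $K$-coset), then $y_0\in Y_0$ and $Y_0\setminus \{y_0\}$ is $H$-periodic; moreover, if $|Y_0|\geq 2$, then $H\leq K$. 3. If $A,B\subseteq G$ satisfy $A+B=Y$ and $|A+B|=|A|+|B|-1$, then there are $a_0\in A$ and $b_0\in B$ such that $A\setminus \{a_0\}$ and $B\setminus \{b_0\}$ are $H$-periodic and $a_0+b_0=y_0$.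
   Context: $\mathsf H(A)=\{g\in G:g+A=A\}$ is the stabilizer; $A$ is aperiodic if $\mathsf H(A)$ is trivial, periodic otherwise, and $H$-periodic if it is a union of $H$-cosets. A set $A$ is quasi-periodic if there is a subset $A_\emptyset\subseteq A$ such that $A\setminus A_\emptyset$ is nonempty and periodic and $A_\emptyset$ is contained in a single $\mathsf H(A\setminus A_\emptyset)$-coset. For a nontrivial subgroup $K$, a $K$-quasi-periodic decomposition of $A$ is a partition $A=(A\setminus A_\emptyset)\cup A_\emptyset$ with $A_\emptyset$ a subset of a $K$-coset and $A\setminus A_\emptyset$ $K$-periodic (or empty); a quasi-periodic decomposition is a $K$-quasi-periodic decomposition for some nontrivial $K$; it is reduced if $A_\emptyset$ is not quasi-periodic. $A+B=\{a+b:a\in A,b\in B\}$. *)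

theory Defs
  imports Main
begin

definition subgrp :: "'a::ab_group_add set \<Rightarrow> bool" where
  "subgrp H \<longleftrightarrow> 0 \<in> H \<and> (\<forall>x\<in>H. \<forall>y\<in>H. x + y \<in> H) \<and> (\<forall>x\<in>H. - x \<in> H)"

definition nontrivial_subgrp :: "'a::ab_group_add set \<Rightarrow> bool" where
  "nontrivial_subgrp K \<longleftrightarrow> subgrp K \<and> K \<noteq> {0}"

definition sumset :: "'a::ab_group_add set \<Rightarrow> 'a set \<Rightarrow> 'a set" where
  "sumset A B = {a + b | a b. a \<in> A \<and> b \<in> B}"

definition stab :: "'a::ab_group_add set \<Rightarrow> 'a set" where
  "stab A = {g. (\<lambda>x. g + x) ` A = A}"

definition aperiodic :: "'a::ab_group_add set \<Rightarrow> bool" where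
  "aperiodic A \<longleftrightarrow> stab A = {0}"

definition periodic :: "'a::ab_group_add set \<Rightarrow> bool" where
  "periodic A \<longleftrightarrow> \<not> aperiodic A"

definition periodic_by :: "'a::ab_group_add set \<Rightarrow> 'a set \<Rightarrow> bool" where
  "periodic_by H A \<longleftrightarrow> (\<exists>S. A = (\<Union>x\<in>S. (\<lambda>h. x + h) ` H))"

definition in_one_coset :: "'a::ab_group_add set \<Rightarrow> 'a set \<Rightarrow> bool" where
  "in_one_coset K A \<longleftrightarrow> (\<exists>x. A \<subseteq> (\<lambda>h. x + h) ` K)"

definition quasi_periodic :: "'a::ab_group_add set \<Rightarrow> bool" where
  "quasi_periodic A \<longleftrightarrow>
     (\<exists>A0 \<subseteq> A. A - A0 \<noteq> {} \<and> periodic (A - A0) \<and> in_one_coset (stab (A - A0)) A0)"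

definition qp_decomp :: "'a::ab_group_add set \<Rightarrow> 'a set \<Rightarrow> 'a set \<Rightarrow> 'a set \<Rightarrow> bool" where
  "qp_decomp K A A1 A0 \<longleftrightarrow> nontrivial_subgrp K \<and> A1 \<union> A0 = A \<and> A1 \<inter> A0 = {} \<and>
     A0 \<noteq> {} \<and> in_one_coset K A0 \<and> periodic_by K A1"

definition reduced_qp_decomp :: "'a::ab_group_add set \<Rightarrow> 'a set \<Rightarrow> 'a set \<Rightarrow> 'a set \<Rightarrow> bool" where
  "reduced_qp_decomp K A A1 A0 \<longleftrightarrow> qp_decomp K A A1 A0 \<and> \<not> quasi_periodic A0"

end

theory Submission
  imports Defs
begin

lemma sumset_iff: "z \<in> sumset A B \<longleftrightarrow> (\<exists>a\<in>A. \<exists>b\<in>B. z = a + b)"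
  unfolding sumset_def by blast

lemma sumset_comm: "sumset A B = sumset B A"
  unfolding sumset_def by (auto; metis add.commute)

lemma sumsetI: "a \<in> A \<Longrightarrow> b \<in> B \<Longrightarrow> a + b \<in> sumset A B"
  unfolding sumset_def by blast

lemma finite_sumset: "finite A \<Longrightarrow> finite B \<Longrightarrow> finite (sumset A B)"
proof -
  assume "finite A" "finite B"
  have "sumset A B = (\<lambda>(a,b). a + b) ` (A \<times> B)" unfolding sumset_def by auto
  thus ?thesis using \<open>finite A\<close> \<open>finite B\<close> by simp
qed

lemma card_transl: "card ((\<lambda>y. y + e) ` (B::'a::ab_group_add set)) = card B"
  by (rule card_image) (auto simp: inj_on_def)

lemma kemp:
  fixes A B :: "'a::ab_group_add set"
  assumes "finite A" "finite B" "a \<in> A" "b \<in> B"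
  shows "card A + card B \<le> card (sumset A B) + card {x\<in>A. a + b - x \<in> B}"
  using assms
proof (induction "card B" arbitrary: A B a b rule: less_induct)
  case less
  note fA = less.prems(1) and fB = less.prems(2) and aA = less.prems(3) and bB = less.prems(4)
  define c where "c = a + b"
  show ?case
  proof (cases "\<exists>e. b + e \<in> A \<and> \<not> ((\<lambda>y. y + e) ` B \<subseteq> A)")
    case True
    then obtain e where e1: "b + e \<in> A" and e2: "\<not> ((\<lambda>y. y + e) ` B \<subseteq> A)" by blast
    define A' where "A' = A \<union> (\<lambda>y. y + e) ` B"
    define B' where "B' = {y\<in>B. y + e \<in> A}"
    have fA': "finite A'" using fA fB by (simp add: A'_def)
    have fB': "finite B'" using fB by (simp add: B'_def)
    have sub: "B' \<subset> B" using e2 by (auto simp: B'_def)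
    hence lt: "card B' < card B" using fB by (simp add: psubset_card_mono)
    have bB': "b \<in> B'" using bB e1 by (simp add: B'_def add.commute)
    have aA': "a \<in> A'" using aA by (simp add: A'_def)
    have IH: "card A' + card B' \<le> card (sumset A' B') + card {x\<in>A'. a + b - x \<in> B'}"
      using less.hyps[OF lt fA' fB' aA' bB'] .
    have int: "A \<inter> (\<lambda>y. y + e) ` B = (\<lambda>y. y + e) ` B'" by (auto simp: B'_def)
    have "card A' + card (A \<inter> (\<lambda>y. y + e) ` B) = card A + card ((\<lambda>y. y + e) ` B)"
      unfolding A'_def using card_Un_Int[of A "(\<lambda>y. y + e) ` B"] fA fB by simp
    hence c1: "card A' + card B' = card A + card B"
      using int card_transl[of e B] card_transl[of e B'] by simp
    have "sumset A' B' \<subseteq> sumset A B"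
    proof
      fix z assume "z \<in> sumset A' B'"
      then obtain x y where x: "x \<in> A'" and y: "y \<in> B'" and z: "z = x + y"
        by (auto simp: sumset_iff)
      show "z \<in> sumset A B"
      proof (cases "x \<in> A")
        case True thus ?thesis using y z by (auto simp: sumset_iff B'_def)
      next
        case False
        then obtain w where w: "w \<in> B" "x = w + e" using x by (auto simp: A'_def)
        have "z = (y + e) + w" using z w by (simp add: algebra_simps)
        thus ?thesis using y w by (auto simp: sumset_iff B'_def)
      qed
    qed
    hence c2: "card (sumset A' B') \<le> card (sumset A B)"
      by (intro card_mono finite_sumset fA fB)
    define f where "f x = (if x \<in> A then x else a + b - x + e)" for x
    have "inj_on f {x\<in>A'. a + b - x \<in> B'}"
    proof (rule inj_onI)
      fix x1 x2 assume h1: "x1 \<in> {x\<in>A'. a + b - x \<in> B'}" and h2: "x2 \<in> {x\<in>A'. a + b - x \<in> B'}"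
        and eq: "f x1 = f x2"
      have k1: "a + b - x1 + e \<in> A" and k2: "a + b - x2 + e \<in> A" using h1 h2 by (auto simp: B'_def)
      show "x1 = x2"
      proof (cases "x1 \<in> A"; cases "x2 \<in> A")
        assume "x1 \<in> A" "x2 \<in> A" thus ?thesis using eq by (simp add: f_def)
      next
        assume "x1 \<in> A" "x2 \<notin> A"
        hence "x2 = a + b - x1 + e" using eq by (simp add: f_def algebra_simps)
        thus ?thesis using k1 \<open>x2 \<notin> A\<close> by simp
      next
        assume "x1 \<notin> A" "x2 \<in> A"
        hence "x1 = a + b - x2 + e" using eq by (simp add: f_def algebra_simps)
        thus ?thesis using k2 \<open>x1 \<notin> A\<close> by simp
      next
        assume "x1 \<notin> A" "x2 \<notin> A" thus ?thesis using eq by (simp add: f_def)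
      qed
    qed
    moreover have "f ` {x\<in>A'. a + b - x \<in> B'} \<subseteq> {x\<in>A. a + b - x \<in> B}"
    proof
      fix z assume "z \<in> f ` {x\<in>A'. a + b - x \<in> B'}"
      then obtain x where x: "x \<in> A'" "a + b - x \<in> B'" and z: "z = f x" by auto
      show "z \<in> {x\<in>A. a + b - x \<in> B}"
      proof (cases "x \<in> A")
        case True thus ?thesis using x z by (auto simp: f_def B'_def)
      next
        case False
        then obtain w where w: "w \<in> B" "x = w + e" using x by (auto simp: A'_def)
        have "z = a + b - x + e" using z False by (simp add: f_def)
        moreover have "a + b - x + e \<in> A" using x by (simp add: B'_def)
        moreover have "a + b - (a + b - x + e) = w" using w by (simp add: algebra_simps)
        ultimately show ?thesis using w by auto
      qed
    qed
    ultimately have c3: "card {x\<in>A'. a + b - x \<in> B'} \<le> card {x\<in>A. a + b - x \<in> B}"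
      by (intro card_inj_on_le) (auto simp: fA)
    show ?thesis using IH c1 c2 c3 by linarith
  next
    case False
    hence cl: "\<And>e y. b + e \<in> A \<Longrightarrow> y \<in> B \<Longrightarrow> y + e \<in> A" by blast
    have d1: "card A \<le> card (sumset A B)"
    proof -
      have "(\<lambda>x. x + b) ` A \<subseteq> sumset A B" using bB unfolding sumset_def by blast
      hence "card ((\<lambda>x. x + b) ` A) \<le> card (sumset A B)"
        by (intro card_mono finite_sumset fA fB)
      thus ?thesis using card_transl[of b A] by simp
    qed
    have mem: "a + b - y \<in> A" if y: "y \<in> B" for y
    proof -
      define k where "k = y - b"
      have "(\<lambda>x. x + k) ` A \<subseteq> A"
      proof
        fix z assume "z \<in> (\<lambda>x. x + k) ` A"
        then obtain x where x: "x \<in> A" "z = x + k" by auto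
        have "b + (x - b) \<in> A" using x by simp
        from cl[OF this y] have "y + (x - b) \<in> A" .
        moreover have "y + (x - b) = z" using x by (simp add: k_def algebra_simps)
        ultimately show "z \<in> A" by simp
      qed
      moreover have "card ((\<lambda>x. x + k) ` A) = card A" by (rule card_transl)
      ultimately have "(\<lambda>x. x + k) ` A = A" using fA by (simp add: card_subset_eq)
      hence "a \<in> (\<lambda>x. x + k) ` A" using aA by simp
      then obtain x where "x \<in> A" "a = x + k" by auto
      thus ?thesis by (simp add: k_def algebra_simps)
    qed
    have "(\<lambda>y. a + b - y) ` B \<subseteq> {x\<in>A. a + b - x \<in> B}" using mem by auto
    moreover have "inj_on (\<lambda>y. a + b - y) B" by (auto simp: inj_on_def)
    ultimately have d2: "card B \<le> card {x\<in>A. a + b - x \<in> B}"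
      using card_inj_on_le[of "\<lambda>y. a + b - y" B] fA by auto
    show ?thesis using d1 d2 by linarith
  qed
qed

lemma per_iff:
  assumes "subgrp H"
  shows "periodic_by H X \<longleftrightarrow> (\<forall>x\<in>X. \<forall>h\<in>H. x + h \<in> X)"
proof
  assume "periodic_by H X"
  then obtain S where S: "X = (\<Union>x\<in>S. (\<lambda>h. x + h) ` H)" by (auto simp: periodic_by_def)
  show "\<forall>x\<in>X. \<forall>h\<in>H. x + h \<in> X"
  proof (intro ballI)
    fix x h assume "x \<in> X" "h \<in> H"
    then obtain s h0 where "s \<in> S" "h0 \<in> H" "x = s + h0" using S by auto
    moreover have "h0 + h \<in> H" using assms \<open>h0 \<in> H\<close> \<open>h \<in> H\<close> by (simp add: subgrp_def)
    ultimately show "x + h \<in> X" using S by (auto simp: add.assoc)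
  qed
next
  assume cl: "\<forall>x\<in>X. \<forall>h\<in>H. x + h \<in> X"
  have "X = (\<Union>x\<in>X. (\<lambda>h. x + h) ` H)"
  proof
    show "X \<subseteq> (\<Union>x\<in>X. (\<lambda>h. x + h) ` H)"
    proof
      fix x assume "x \<in> X"
      moreover have "x = x + 0" by simp
      moreover have "0 \<in> H" using assms by (simp add: subgrp_def)
      ultimately show "x \<in> (\<Union>x\<in>X. (\<lambda>h. x + h) ` H)" by blast
    qed
  qed (use cl in auto)
  thus "periodic_by H X" unfolding periodic_by_def by blast
qed

lemma lowb:
  fixes A B H :: "'a::ab_group_add set"
  assumes sg: "subgrp H" and fA: "finite A" and fH: "finite H"
    and L: "\<And>h. h \<in> H \<Longrightarrow> y0 + h \<in> sumset A B \<Longrightarrow> h = 0"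
  defines "R \<equiv> {x\<in>A. y0 - x \<in> B}"
  shows "A \<union> sumset R H \<subseteq> sumset A H"
    and "card (A \<union> sumset R H) + card R = card A + card R * card H"
    and "\<And>x x'. x \<in> R \<Longrightarrow> x' \<in> A \<Longrightarrow> x' - x \<in> H \<Longrightarrow> x' = x"
proof -
  have z: "0 \<in> H" using sg by (simp add: subgrp_def)
  show F1: "\<And>x x'. x \<in> R \<Longrightarrow> x' \<in> A \<Longrightarrow> x' - x \<in> H \<Longrightarrow> x' = x"
  proof -
    fix x x' assume x: "x \<in> R" and x': "x' \<in> A" and d: "x' - x \<in> H"
    have "x' + (y0 - x) \<in> sumset A B" using x x' unfolding R_def sumset_def by blast
    moreover have "x' + (y0 - x) = y0 + (x' - x)" by (simp add: algebra_simps)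
    ultimately have "x' - x = 0" using L[OF d] by simp
    thus "x' = x" by simp
  qed
  have RA: "R \<subseteq> A" by (auto simp: R_def)
  show "A \<union> sumset R H \<subseteq> sumset A H"
  proof
    fix z assume "z \<in> A \<union> sumset R H"
    thus "z \<in> sumset A H"
    proof
      assume "z \<in> A" thus ?thesis using z unfolding sumset_def by force
    next
      assume "z \<in> sumset R H" thus ?thesis using RA unfolding sumset_def by blast
    qed
  qed
  have fR: "finite R" using fA RA finite_subset by blast
  have eqi: "sumset R H = (\<lambda>(x,h). x + h) ` (R \<times> H)" unfolding sumset_def by auto
  have inj: "inj_on (\<lambda>(x,h). x + h) (R \<times> H)"
  proof (rule inj_onI, clarify)
    fix x h x' h' assume "x \<in> R" "h \<in> H" "x' \<in> R" "h' \<in> H" and e: "x + h = x' + h'"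
    have "x' - x = h - h'" using e by (simp add: algebra_simps)
    moreover have "h - h' \<in> H" using sg \<open>h \<in> H\<close> \<open>h' \<in> H\<close> unfolding subgrp_def
      by (metis diff_conv_add_uminus)
    ultimately have "x' = x" using F1 \<open>x \<in> R\<close> \<open>x' \<in> R\<close> RA by auto
    thus "x = x' \<and> h = h'" using e by simp
  qed
  have cRH: "card (sumset R H) = card R * card H"
    using eqi card_image[OF inj] by (simp add: card_cartesian_product)
  have int: "A \<inter> sumset R H = R"
  proof
    show "A \<inter> sumset R H \<subseteq> R"
    proof
      fix z assume "z \<in> A \<inter> sumset R H"
      then obtain x h where "z \<in> A" "x \<in> R" "h \<in> H" "z = x + h" unfolding sumset_def by blast
      hence "z = x" using F1[of x z] by simp
      thus "z \<in> R" using \<open>x \<in> R\<close> by simp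
    qed
    show "R \<subseteq> A \<inter> sumset R H" using RA z unfolding sumset_def by force
  qed
  have "finite (sumset R H)" using finite_sumset fR fH by blast
  from card_Un_Int[OF fA this] int cRH
  show "card (A \<union> sumset R H) + card R = card A + card R * card H" by simp
qed

lemma side:
  fixes A B H Y :: "'a::ab_group_add set"
  assumes sg: "subgrp H" and fH: "finite H" and n3: "3 \<le> card H"
    and fY: "finite Y" and y0: "y0 \<in> Y"
    and clY: "\<forall>x\<in>Y-{y0}. \<forall>h\<in>H. x + h \<in> Y-{y0}"
    and AB: "sumset A B = Y" and cd: "card Y = card A + card B - 1"
  shows "\<exists>a0\<in>A. y0 - a0 \<in> B \<and> (\<forall>x\<in>A-{a0}. \<forall>h\<in>H. x + h \<in> A-{a0})"
proof -
  have z: "0 \<in> H" and addH: "\<And>x y. x \<in> H \<Longrightarrow> y \<in> H \<Longrightarrow> x + y \<in> H"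
    and negH: "\<And>x. x \<in> H \<Longrightarrow> - x \<in> H" using sg by (auto simp: subgrp_def)
  have diffH: "\<And>x y. x \<in> H \<Longrightarrow> y \<in> H \<Longrightarrow> x - y \<in> H"
    using addH negH by (metis diff_conv_add_uminus)
  have L: "h = 0" if h: "h \<in> H" and yh: "y0 + h \<in> Y" for h
  proof (rule ccontr)
    assume "h \<noteq> 0"
    hence "y0 + h \<in> Y - {y0}" using yh by simp
    hence "y0 + h + (- h) \<in> Y - {y0}" using clY negH[OF h] by blast
    thus False by simp
  qed
  obtain a b where aA: "a \<in> A" and bB: "b \<in> B" and ab: "y0 = a + b"
    using y0 AB unfolding sumset_def by blast
  have fA: "finite A"
  proof -
    have "(\<lambda>x. x + b) ` A \<subseteq> Y" using AB bB unfolding sumset_def by blast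
    hence "finite ((\<lambda>x. x + b) ` A)" using fY finite_subset by blast
    thus ?thesis by (rule finite_imageD) (auto simp: inj_on_def)
  qed
  have fB: "finite B"
  proof -
    have "(\<lambda>x. a + x) ` B \<subseteq> Y" using AB aA unfolding sumset_def by blast
    hence "finite ((\<lambda>x. a + x) ` B)" using fY finite_subset by blast
    thus ?thesis by (rule finite_imageD) (auto simp: inj_on_def)
  qed
  have BA: "sumset B A = Y" using AB sumset_comm by metis
  define R where "R = {x\<in>A. y0 - x \<in> B}"
  define RB where "RB = {x\<in>B. y0 - x \<in> A}"
  have lA1: "A \<union> sumset R H \<subseteq> sumset A H"
    and lA2: "card (A \<union> sumset R H) + card R = card A + card R * card H"
    and F1: "\<And>x x'. x \<in> R \<Longrightarrow> x' \<in> A \<Longrightarrow> x' - x \<in> H \<Longrightarrow> x' = x"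
    using lowb[OF sg fA fH, of y0 B] L AB unfolding R_def by auto
  have lB1: "B \<union> sumset RB H \<subseteq> sumset B H"
    and lB2: "card (B \<union> sumset RB H) + card RB = card B + card RB * card H"
    using lowb[OF sg fB fH, of y0 A] L BA unfolding RB_def by auto
  have "RB = (\<lambda>x. y0 - x) ` R" unfolding R_def RB_def by force
  moreover have "inj_on (\<lambda>x. y0 - x) R" by (auto simp: inj_on_def)
  ultimately have cRB: "card RB = card R" by (simp add: card_image)
  define P where "P = sumset A H"
  define Q where "Q = sumset B H"
  have fP: "finite P" unfolding P_def using fA fH finite_sumset by blast
  have fQ: "finite Q" unfolding Q_def using fB fH finite_sumset by blast
  have aP: "a \<in> P" unfolding P_def sumset_def using aA z by force
  have bQ: "b \<in> Q" unfolding Q_def sumset_def using bB z by force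
  have K: "card P + card Q \<le> card (sumset P Q) + card {x\<in>P. a + b - x \<in> Q}"
    by (rule kemp[OF fP fQ aP bQ])
  have PQ: "sumset P Q \<subseteq> (Y - {y0}) \<union> (\<lambda>h. y0 + h) ` H"
  proof
    fix z assume "z \<in> sumset P Q"
    then obtain x1 h1 x2 h2 where "x1 \<in> A" "h1 \<in> H" "x2 \<in> B" "h2 \<in> H" "z = (x1 + x2) + (h1 + h2)"
      unfolding P_def Q_def sumset_def by (auto simp: algebra_simps)
    moreover have "x1 + x2 \<in> Y" using AB \<open>x1 \<in> A\<close> \<open>x2 \<in> B\<close> unfolding sumset_def by blast
    ultimately show "z \<in> (Y - {y0}) \<union> (\<lambda>h. y0 + h) ` H"
      using clY addH by (cases "x1 + x2 = y0") auto
  qed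
  have cPQ: "card (sumset P Q) \<le> card Y - 1 + card H"
  proof -
    have "card (sumset P Q) \<le> card ((Y - {y0}) \<union> (\<lambda>h. y0 + h) ` H)"
      using PQ fY fH by (intro card_mono) auto
    also have "\<dots> \<le> card (Y - {y0}) + card ((\<lambda>h. y0 + h) ` H)" by (rule card_Un_le)
    also have "\<dots> \<le> card Y - 1 + card H"
      using y0 fY card_image_le[OF fH, of "\<lambda>h. y0 + h"] by simp
    finally show ?thesis .
  qed
  have rPQ: "card {x\<in>P. a + b - x \<in> Q} \<le> card R * card H"
  proof -
    have "{x\<in>P. a + b - x \<in> Q} \<subseteq> sumset R H"
    proof
      fix x assume x: "x \<in> {x\<in>P. a + b - x \<in> Q}"
      then obtain x1 h1 x2 h2 where "x1 \<in> A" "h1 \<in> H" "x2 \<in> B" "h2 \<in> H" "x = x1 + h1"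
        "y0 - x = x2 + h2" unfolding P_def Q_def sumset_def ab by auto
      hence e: "x1 + x2 = y0 + (- (h1 + h2))" by (simp add: algebra_simps)
      have "x1 + x2 \<in> Y" using AB \<open>x1 \<in> A\<close> \<open>x2 \<in> B\<close> unfolding sumset_def by blast
      hence "- (h1 + h2) = 0" using L e addH negH \<open>h1 \<in> H\<close> \<open>h2 \<in> H\<close> by metis
      hence "x1 + x2 = y0" using e by simp
      hence "y0 - x1 = x2" by (metis add_diff_cancel_left')
      hence "x1 \<in> R" using \<open>x1 \<in> A\<close> \<open>x2 \<in> B\<close> unfolding R_def by simp
      thus "x \<in> sumset R H" using \<open>h1 \<in> H\<close> \<open>x = x1 + h1\<close> unfolding sumset_def by blast
    qed
    moreover have "finite (sumset R H)" using fA fH finite_sumset[of R H] unfolding R_def by auto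
    ultimately have "card {x\<in>P. a + b - x \<in> Q} \<le> card (sumset R H)" by (rule card_mono[rotated])
    also have "\<dots> \<le> card R * card H"
    proof -
      have "sumset R H = (\<lambda>(x,h). x + h) ` (R \<times> H)" unfolding sumset_def by auto
      thus ?thesis using card_image_le[of "R \<times> H" "\<lambda>(x,h). x + h"] fA fH
        by (simp add: card_cartesian_product R_def)
    qed
    finally show ?thesis .
  qed
  have cP: "card (A \<union> sumset R H) \<le> card P" using lA1 fP unfolding P_def by (simp add: card_mono)
  have cQ: "card (B \<union> sumset RB H) \<le> card Q" using lB1 fQ unfolding Q_def by (simp add: card_mono)
  have A1: "card A \<ge> 1" using aA fA by (metis One_nat_def Suc_leI card_gt_0_iff empty_iff)
  have B1: "card B \<ge> 1" using bB fB by (metis One_nat_def Suc_leI card_gt_0_iff empty_iff)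
  have aR: "a \<in> R" unfolding R_def using aA bB ab by simp
  have fR: "finite R" using fA unfolding R_def by simp
  have r1: "card R \<ge> 1" using aR fR by (metis One_nat_def Suc_leI card_gt_0_iff empty_iff)
  define r where "r = card R"
  define n where "n = card H"
  have ineq: "card A + card B + 2 * (r * n) + 2 \<le> card A + card B + n + r * n + 2 * r"
    using K cPQ rPQ cP cQ lA2 lB2[unfolded cRB] cd A1 B1 unfolding r_def n_def by linarith
  have "r \<le> 1"
  proof (rule ccontr)
    assume "\<not> r \<le> 1"
    hence "r \<ge> 2" by simp
    hence "(r - 2) * 3 \<le> (r - 2) * n" using n3 unfolding n_def by simp
    moreover have "r * n = (r - 2) * n + 2 * n" using \<open>r \<ge> 2\<close> by (metis add_mult_distrib le_add_diff_inverse2)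
    ultimately show False using ineq \<open>r \<ge> 2\<close> n3 unfolding n_def by linarith
  qed
  hence r1': "card R = 1" using r1 unfolding r_def by simp
  hence Ra: "R = {a}" using aR fR by (metis card_1_singletonE singletonD)
  have "card P \<le> card (A \<union> sumset R H)"
    using K cPQ rPQ[unfolded r1'] cP cQ lA2[unfolded r1'] lB2[unfolded cRB r1'] cd A1 B1 by linarith
  hence Peq: "A \<union> sumset R H = P" using lA1 fP unfolding P_def by (metis card_seteq)
  show ?thesis
  proof (intro bexI conjI ballI)
    show "a \<in> A" by (rule aA)
    show "y0 - a \<in> B" using ab bB by simp
    fix x h assume x: "x \<in> A - {a}" and h: "h \<in> H"
    have notin: "x + h \<notin> sumset R H"
    proof
      assume "x + h \<in> sumset R H"
      then obtain h' where "h' \<in> H" "x + h = a + h'" unfolding Ra sumset_def by auto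
      hence "x - a = h' - h" by (simp add: algebra_simps)
      hence "x - a \<in> H" using diffH \<open>h' \<in> H\<close> h by simp
      hence "x = a" using F1[of a x] aR x by simp
      thus False using x by simp
    qed
    have "x + h \<in> P" unfolding P_def sumset_def using x h by blast
    hence "x + h \<in> A" using Peq notin by blast
    moreover have "x + h \<noteq> a" using notin z unfolding Ra sumset_def by force
    ultimately show "x + h \<in> A - {a}" by simp
  qed
qed

lemma per_stab:
  assumes "subgrp H" and "\<forall>x\<in>X. \<forall>h\<in>H. x + h \<in> X"
  shows "H \<subseteq> stab X"
proof
  fix h assume h: "h \<in> H"
  have nh: "- h \<in> H" using assms(1) h by (simp add: subgrp_def)
  have "(\<lambda>x. h + x) ` X = X"
  proof
    show "(\<lambda>x. h + x) ` X \<subseteq> X" using assms(2) h by (auto simp: add.commute)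
    show "X \<subseteq> (\<lambda>x. h + x) ` X"
    proof
      fix x assume "x \<in> X"
      hence "x + - h \<in> X" using assms(2) nh by blast
      moreover have "x = h + (x + - h)" by simp
      ultimately show "x \<in> (\<lambda>x. h + x) ` X" by blast
    qed
  qed
  thus "h \<in> stab X" by (simp add: stab_def)
qed

theorem lemma2p5:
  fixes H Y :: "'a::ab_group_add set" and y0 :: 'a
  assumes "subgrp H" and "infinite H \<or> 3 \<le> card H"
    and "finite Y" and "y0 \<in> Y" and "periodic_by H (Y - {y0})"
  shows "aperiodic Y
    \<and> (\<exists>K. reduced_qp_decomp K Y (Y - {y0}) {y0})
    \<and> (\<forall>K Y1 Y0. reduced_qp_decomp K Y Y1 Y0 \<longrightarrow> Y1 = Y - {y0} \<and> Y0 = {y0})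
    \<and> (\<forall>K Y1 Y0. qp_decomp K Y Y1 Y0 \<longrightarrow>
          y0 \<in> Y0 \<and> periodic_by H (Y0 - {y0}) \<and> (2 \<le> card Y0 \<longrightarrow> H \<subseteq> K))
    \<and> (\<forall>A B. sumset A B = Y \<and> card (sumset A B) = card A + card B - 1 \<longrightarrow>
          (\<exists>a0\<in>A. \<exists>b0\<in>B. periodic_by H (A - {a0}) \<and> periodic_by H (B - {b0})
               \<and> a0 + b0 = y0))"
proof -
  note sg = assms(1) and fY = assms(3) and y0 = assms(4)
  have z: "0 \<in> H" and addH: "\<And>x y. x \<in> H \<Longrightarrow> y \<in> H \<Longrightarrow> x + y \<in> H"
    and negH: "\<And>x. x \<in> H \<Longrightarrow> - x \<in> H" using sg by (auto simp: subgrp_def)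
  have diffH: "\<And>x y. x \<in> H \<Longrightarrow> y \<in> H \<Longrightarrow> x - y \<in> H"
    using addH negH by (metis diff_conv_add_uminus)
  have clY: "\<forall>x\<in>Y-{y0}. \<forall>h\<in>H. x + h \<in> Y-{y0}" using assms(5) by (rule per_iff[OF sg, THEN iffD1])
  have small: "\<not> H \<subseteq> {0, h}" for h
  proof
    assume sub: "H \<subseteq> {0, h}"
    have f2: "finite {0, h}" by simp
    have fH: "finite H" by (rule finite_subset[OF sub f2])
    have "card H \<le> card {0, h}" by (rule card_mono[OF f2 sub])
    moreover have "card {0, h} \<le> 2" by (simp add: card_insert_le_m1)
    ultimately show False using assms(2) fH by linarith
  qed
  obtain h1 where h1: "h1 \<in> H" "h1 \<noteq> 0" using small[of 0] by blast
  obtain h2 where h2: "h2 \<in> H" "h2 \<noteq> 0" "h2 \<noteq> h1" using small[of h1] by blast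
  have L: "h = 0" if h: "h \<in> H" and yh: "y0 + h \<in> Y" for h
  proof (rule ccontr)
    assume "h \<noteq> 0"
    hence "y0 + h \<in> Y - {y0}" using yh by simp
    hence "y0 + h + (- h) \<in> Y - {y0}" using clY negH[OF h] by blast
    thus False by simp
  qed
  have stab0: "0 \<in> stab X" for X :: "'a set" by (simp add: stab_def)
  have P1: "aperiodic Y"
  proof -
    have "g = 0" if g: "g \<in> stab Y" for g
    proof (rule ccontr)
      assume gn: "g \<noteq> 0"
      have im: "(\<lambda>x. g + x) ` Y = Y" using g by (simp add: stab_def)
      have "y0 \<in> (\<lambda>x. g + x) ` Y" using im y0 by simp
      then obtain w where w: "w \<in> Y" "y0 = g + w" by blast
      have "w \<noteq> y0" using w gn by auto
      hence "w + h1 \<in> Y - {y0}" using clY w h1 by blast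
      hence "g + (w + h1) \<in> (\<lambda>x. g + x) ` Y" by (intro imageI) simp
      hence "g + (w + h1) \<in> Y" using im by simp
      hence "y0 + h1 \<in> Y" using w by (simp add: algebra_simps)
      thus False using L h1 by blast
    qed
    thus ?thesis using stab0[of Y] by (auto simp: aperiodic_def)
  qed
  have singl_np: "\<not> quasi_periodic {y0}"
  proof
    assume "quasi_periodic {y0}"
    then obtain A0 where "A0 \<subseteq> {y0}" "{y0} - A0 \<noteq> {}" "periodic ({y0} - A0)"
      unfolding quasi_periodic_def by blast
    hence A0e: "A0 = {}" by auto
    hence "periodic {y0}" using \<open>periodic ({y0} - A0)\<close> by simp
    moreover have "stab {y0} = {0}" by (auto simp: stab_def)
    ultimately show False by (simp add: periodic_def aperiodic_def)
  qed
  have ntH: "nontrivial_subgrp H" using sg h1 by (auto simp: nontrivial_subgrp_def)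
  have P2: "reduced_qp_decomp H Y (Y - {y0}) {y0}"
  proof -
    have "y0 \<in> (\<lambda>h. y0 + h) ` H" using z by force
    hence "in_one_coset H {y0}" unfolding in_one_coset_def by blast
    thus ?thesis unfolding reduced_qp_decomp_def qp_decomp_def
      using ntH y0 assms(5) singl_np by auto
  qed
  have P4: "y0 \<in> Y0 \<and> periodic_by H (Y0 - {y0}) \<and> (2 \<le> card Y0 \<longrightarrow> H \<subseteq> K)"
    if qp: "qp_decomp K Y Y1 Y0" for K Y1 Y0
  proof -
    have ntK: "nontrivial_subgrp K" and U: "Y1 \<union> Y0 = Y" and D: "Y1 \<inter> Y0 = {}"
      and ne: "Y0 \<noteq> {}" and co: "in_one_coset K Y0" and pK: "periodic_by K Y1"
      using qp by (auto simp: qp_decomp_def)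
    have sgK: "subgrp K" and zK: "0 \<in> K" using ntK by (auto simp: nontrivial_subgrp_def subgrp_def)
    have addK: "\<And>x y. x \<in> K \<Longrightarrow> y \<in> K \<Longrightarrow> x + y \<in> K"
      and negK: "\<And>x. x \<in> K \<Longrightarrow> - x \<in> K" using sgK by (auto simp: subgrp_def)
    have diffK: "\<And>x y. x \<in> K \<Longrightarrow> y \<in> K \<Longrightarrow> x - y \<in> K"
      using addK negK by (metis diff_conv_add_uminus)
    have clK: "\<forall>x\<in>Y1. \<forall>k\<in>K. x + k \<in> Y1" using pK by (rule per_iff[OF sgK, THEN iffD1])
    obtain c where c: "Y0 \<subseteq> (\<lambda>h. c + h) ` K" using co by (auto simp: in_one_coset_def)
    obtain k where k: "k \<in> K" "k \<noteq> 0" using ntK zK by (auto simp: nontrivial_subgrp_def)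
    have y0Y0: "y0 \<in> Y0"
    proof (rule ccontr)
      assume "y0 \<notin> Y0"
      hence y1: "y0 \<in> Y1" using U y0 by blast
      have yk: "y0 + k \<in> Y - {y0}" using clK y1 k U by auto
      have inY0: "y0 + k + h \<in> Y0" if h: "h \<in> H" "h \<noteq> 0" for h
      proof (rule ccontr)
        assume "y0 + k + h \<notin> Y0"
        moreover have "y0 + k + h \<in> Y" using clY yk h by blast
        ultimately have "y0 + k + h \<in> Y1" using U by blast
        hence "y0 + k + h + - k \<in> Y1" using clK negK k by blast
        moreover have "y0 + k + h + - k = y0 + h" by (simp add: algebra_simps)
        ultimately have "y0 + h \<in> Y" using U by auto
        thus False using L h by blast
      qed
      obtain k1 where k1: "k1 \<in> K" "y0 + k + h1 = c + k1" using inY0[OF h1] c by blast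
      obtain k2 where k2: "k2 \<in> K" "y0 + k + h2 = c + k2" using inY0[OF h2(1,2)] c by blast
      have "(y0 + k + h1) - (y0 + k + h2) = k1 - k2" unfolding k1(2) k2(2) by simp
      hence "h1 - h2 = k1 - k2" by (simp add: algebra_simps)
      hence hK: "h1 - h2 \<in> K" using diffK \<open>k1 \<in> K\<close> \<open>k2 \<in> K\<close> by simp
      have "y0 + (h1 - h2) \<in> Y" using clK y1 hK U by blast
      hence "h1 - h2 = 0" using L diffH h1 h2 by blast
      thus False using h2 by simp
    qed
    obtain k0 where k0: "k0 \<in> K" "y0 = c + k0" using c y0Y0 by blast
    have key: "z + h \<in> Y0 - {y0} \<and> h \<in> K" if zz: "z \<in> Y0" "z \<noteq> y0" and h: "h \<in> H" for z h
    proof -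
      obtain kz where kz: "kz \<in> K" "z = c + kz" using c zz by blast
      have zY: "z \<in> Y - {y0}" using zz U by blast
      hence zh: "z + h \<in> Y - {y0}" using clY h by blast
      have "z + h \<notin> Y1"
      proof
        assume "z + h \<in> Y1"
        moreover have "k0 - kz \<in> K" using diffK k0 kz by simp
        ultimately have "z + h + (k0 - kz) \<in> Y1" using clK by blast
        moreover have "z + h + (k0 - kz) = y0 + h" using k0 kz by (simp add: algebra_simps)
        ultimately have "y0 + h \<in> Y" using U by auto
        hence "h = 0" using L h by blast
        thus False using \<open>z + h \<in> Y1\<close> zz D by auto
      qed
      hence zh0: "z + h \<in> Y0 - {y0}" using zh U by blast
      then obtain k' where "k' \<in> K" "z + h = c + k'" using c by blast
      hence "h = k' - kz" using kz by (simp add: algebra_simps)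
      hence "h \<in> K" using diffK \<open>k' \<in> K\<close> kz by simp
      thus ?thesis using zh0 by simp
    qed
    have per0: "periodic_by H (Y0 - {y0})"
      by (rule per_iff[OF sg, THEN iffD2]) (use key in blast)
    have "H \<subseteq> K" if "2 \<le> card Y0"
    proof -
      have "Y0 \<noteq> {y0}" using that by auto
      then obtain z where "z \<in> Y0" "z \<noteq> y0" using y0Y0 by blast
      thus ?thesis using key by blast
    qed
    thus ?thesis using y0Y0 per0 by blast
  qed
  have P3: "Y1 = Y - {y0} \<and> Y0 = {y0}" if r: "reduced_qp_decomp K Y Y1 Y0" for K Y1 Y0
  proof -
    have qp: "qp_decomp K Y Y1 Y0" and nq: "\<not> quasi_periodic Y0"
      using r by (auto simp: reduced_qp_decomp_def)
    have y0Y0: "y0 \<in> Y0" and pH: "periodic_by H (Y0 - {y0})" using P4[OF qp] by auto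
    have Y0eq: "Y0 = {y0}"
    proof (rule ccontr)
      assume "Y0 \<noteq> {y0}"
      hence ne: "Y0 - {y0} \<noteq> {}" using y0Y0 by blast
      have "H \<subseteq> stab (Y0 - {y0})" by (rule per_stab[OF sg], rule per_iff[OF sg, THEN iffD1, OF pH])
      hence "periodic (Y0 - {y0})" using h1 by (auto simp: periodic_def aperiodic_def)
      moreover have "y0 \<in> (\<lambda>h. y0 + h) ` stab (Y0 - {y0})" using stab0 by force
      hence "in_one_coset (stab (Y0 - {y0})) {y0}" unfolding in_one_coset_def by blast
      moreover have "{y0} \<subseteq> Y0" using y0Y0 by simp
      ultimately have "quasi_periodic Y0" unfolding quasi_periodic_def using ne by blast
      thus False using nq by simp
    qed
    have "Y1 \<union> Y0 = Y" "Y1 \<inter> Y0 = {}" using qp by (auto simp: qp_decomp_def)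
    thus ?thesis using Y0eq by blast
  qed
  have P5: "\<exists>a0\<in>A. \<exists>b0\<in>B. periodic_by H (A - {a0}) \<and> periodic_by H (B - {b0}) \<and> a0 + b0 = y0"
    if AB: "sumset A B = Y" and cd: "card (sumset A B) = card A + card B - 1" for A B
  proof (cases "finite H")
    case False
    have "Y - {y0} = {}"
    proof (rule ccontr)
      assume "Y - {y0} \<noteq> {}"
      then obtain x where x: "x \<in> Y - {y0}" by blast
      hence "(\<lambda>h. x + h) ` H \<subseteq> Y" using clY by auto
      moreover have "inj_on (\<lambda>h. x + h) H" by (auto simp: inj_on_def)
      hence "infinite ((\<lambda>h. x + h) ` H)" using False finite_imageD by blast
      ultimately show False using fY finite_subset by blast
    qed
    hence Yeq: "Y = {y0}" using y0 by blast
    have "y0 \<in> sumset A B" using y0 AB by simp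
    then obtain a b where ab: "a \<in> A" "b \<in> B" "y0 = a + b" unfolding sumset_iff by blast
    have "A = {a}"
    proof -
      have "x = a" if "x \<in> A" for x
      proof -
        have "x + b \<in> Y" using sumsetI[OF that ab(2)] AB by simp
        thus ?thesis using Yeq ab by simp
      qed
      thus ?thesis using ab by blast
    qed
    moreover have "B = {b}"
    proof -
      have "x = b" if "x \<in> B" for x
      proof -
        have "a + x \<in> Y" using sumsetI[OF ab(1) that] AB by simp
        thus ?thesis using Yeq ab by simp
      qed
      thus ?thesis using ab by blast
    qed
    moreover have "periodic_by H {}" unfolding periodic_by_def by auto
    ultimately show ?thesis using ab by auto
  next
    case True
    have n3: "3 \<le> card H" using assms(2) True by simp
    have cd': "card Y = card A + card B - 1" using cd AB by simp
    obtain a0 where a0: "a0 \<in> A" "y0 - a0 \<in> B" and pa: "\<forall>x\<in>A-{a0}. \<forall>h\<in>H. x + h \<in> A-{a0}"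
      using side[OF sg True n3 fY y0 clY AB cd'] by blast
    have BA: "sumset B A = Y" using sumset_comm[of B A] AB by simp
    have cd'': "card Y = card B + card A - 1" using cd' by simp
    obtain b0 where b0: "b0 \<in> B" "y0 - b0 \<in> A" and pb: "\<forall>x\<in>B-{b0}. \<forall>h\<in>H. x + h \<in> B-{b0}"
      using side[OF sg True n3 fY y0 clY BA cd''] by blast
    have b0e: "b0 = y0 - a0"
    proof (rule ccontr)
      assume ne: "b0 \<noteq> y0 - a0"
      have "y0 - a0 \<in> B - {b0}" using a0(2) ne by simp
      from pb[rule_format, OF this h1(1)] have "y0 - a0 + h1 \<in> B - {b0}" .
      hence "y0 - a0 + h1 \<in> B" by simp
      from sumsetI[OF a0(1) this] have "a0 + (y0 - a0 + h1) \<in> Y" using AB by simp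
      moreover have "a0 + (y0 - a0 + h1) = y0 + h1" by (simp add: algebra_simps)
      ultimately have "y0 + h1 \<in> Y" by simp
      thus False using L h1 by blast
    qed
    moreover have "periodic_by H (A - {a0})" by (rule per_iff[OF sg, THEN iffD2, OF pa])
    moreover have "periodic_by H (B - {b0})" by (rule per_iff[OF sg, THEN iffD2, OF pb])
    moreover have "a0 + b0 = y0" using b0e by simp
    ultimately show ?thesis using a0(1) b0(1) by (intro bexI[of _ a0] bexI[of _ b0] conjI)
  qed
  show ?thesis
  proof (intro conjI allI impI)
    show "aperiodic Y" by (rule P1)
    show "\<exists>K. reduced_qp_decomp K Y (Y - {y0}) {y0}" using P2 by (rule exI)
  next
    fix K Y1 Y0 assume "reduced_qp_decomp K Y Y1 Y0"
    from P3[OF this] show "Y1 = Y - {y0}" "Y0 = {y0}" by (rule conjunct1, rule conjunct2)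
  next
    fix K Y1 Y0 assume "qp_decomp K Y Y1 Y0"
    note q = P4[OF this]
    from q show "y0 \<in> Y0" by (rule conjunct1)
    from q show "periodic_by H (Y0 - {y0})" by (rule conjunct1[OF conjunct2])
    from q show "2 \<le> card Y0 \<Longrightarrow> H \<subseteq> K" by (rule mp[OF conjunct2[OF conjunct2]])
  next
    fix A B assume hh: "sumset A B = Y \<and> card (sumset A B) = card A + card B - 1"
    have e1: "sumset A B = Y" using hh by (rule conjunct1)
    have e2: "card (sumset A B) = card A + card B - 1" using hh by (rule conjunct2)
    show "\<exists>a0\<in>A. \<exists>b0\<in>B. periodic_by H (A - {a0}) \<and> periodic_by H (B - {b0}) \<and> a0 + b0 = y0"
      by (rule P5[OF e1 e2])
  qed
qed

end
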